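(* Let $G$ be a Nash equilibrium graph and $H\subseteq G$ a non-trivial $2$-edge-connected component. Let $\pi=u_0-u_1-\dots-u_k$ be a $2$-path in $H$, oriented so that each $u_i$ with $0\le i<k$ has bought the link $(u_i,u_{i+1})$, and suppose $g(G)\ge 2k$. For $0\le i\le k-2$ let $\Delta C(u_i)$ be the change in the cost of $u_i$ caused by the $2$-swap on $u_{i+1}$ (i.e. $u_i$ replaces its link $(u_i,u_{i+1})$ by the link $(u_i,u_{i+2})$). Then $$\Delta C(u_i)=U_{i+1}-U_{i+2}-\dots-U_{k-1}-N_i,$$ where $N_i$ is the number of vertices $v\in V(G)\setminus\bar\pi$ with $x_1(v)+k-i\le x_2(v)+i$.
   Context: Sum network creation game: players $V=\{1,\dots,n\}$, parameter $\alpha>0$; a strategy of $u$ is $s_u\subseteq V\setminus\{u\}$; $G_s$ has an edge $uv$ whenever $v\in s_u$ or $u\in s_v$, and is regarded as a digraph with arc $(u,v)$ when $v\in s_u$; the cost of $u$ is $c_u(s)=\alpha|s_u|+\sum_{v\ne u}d_{G_s}(u,v)$. A Nash equilibrium graph is $G_s$ for a strategy vector $s$ from which no player can strictly lower his cost unilaterally. A $2$-edge-connected component $H$ is a maximal bridgeless subgraph; non-trivial means at least $3$ vertices. For $u\in V(H)$, $T(u)$ is the connected component containing $u$ of the subgraph of $G$ induced by $(V(G)\setminus V(H))\cup\{u\}$; the weight of $u_i$ is $U_i=|T(u_i)|$. A $2$-path in $H$ is a path $u_0-\dots-u_k$ in $H$ with $deg^-_H(u_i)=deg^+_H(u_i)=1$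 for all $0<i<k$ (in- and out-degrees counted among arcs to vertices of $H$). $g(G)$ is the girth of $G$ ($\infty$ for a tree). The interior of $\pi$ is $\bar\pi=\bigcup_{0<j<k}T(u_j)$, and for $v\in V(G)\setminus\bar\pi$, $x_1(v)$ and $x_2(v)$ are the distances in the graph $G$ with the vertices of $\bar\pi$ removed from $v$ to $u_k$ and to $u_0$ respectively. *)

theory Defs
  imports Complex_Main "HOL-Library.Extended_Real"
begin

definition strategy_vector :: "'a set \<Rightarrow> ('a \<Rightarrow> 'a set) \<Rightarrow> bool" where
  "strategy_vector V s \<longleftrightarrow> (\<forall>u\<in>V. s u \<subseteq> V - {u})"

definition gadj :: "'a set \<Rightarrow> ('a \<Rightarrow> 'a set) \<Rightarrow> 'a \<Rightarrow> 'a \<Rightarrow> bool" where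
  "gadj V s a b \<longleftrightarrow> a \<in> V \<and> b \<in> V \<and> (b \<in> s a \<or> a \<in> s b)"

definition walk_in :: "('a \<Rightarrow> 'a \<Rightarrow> bool) \<Rightarrow> 'a set \<Rightarrow> 'a list \<Rightarrow> bool" where
  "walk_in E W p \<longleftrightarrow> p \<noteq> [] \<and> set p \<subseteq> W \<and> (\<forall>i. Suc i < length p \<longrightarrow> E (p ! i) (p ! Suc i))"

definition dist_in :: "('a \<Rightarrow> 'a \<Rightarrow> bool) \<Rightarrow> 'a set \<Rightarrow> 'a \<Rightarrow> 'a \<Rightarrow> enat" where
  "dist_in E W x y = (INF p \<in> {p. walk_in E W p \<and> hd p = x \<and> last p = y}. enat (length p - 1))"

definition cost :: "real \<Rightarrow> 'a set \<Rightarrow> ('a \<Rightarrow> 'a set) \<Rightarrow> 'a \<Rightarrow> ereal" where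
  "cost \<alpha> V s u = ereal (\<alpha> * real (card (s u)))
      + ereal_of_enat (\<Sum>v\<in>V - {u}. dist_in (gadj V s) V u v)"

definition nash_equilibrium :: "real \<Rightarrow> 'a set \<Rightarrow> ('a \<Rightarrow> 'a set) \<Rightarrow> bool" where
  "nash_equilibrium \<alpha> V s \<longleftrightarrow> strategy_vector V s \<and>
     (\<forall>u\<in>V. \<forall>t. t \<subseteq> V - {u} \<longrightarrow> cost \<alpha> V s u \<le> cost \<alpha> V (s(u := t)) u)"

definition connected_in :: "('a \<Rightarrow> 'a \<Rightarrow> bool) \<Rightarrow> 'a set \<Rightarrow> bool" where
  "connected_in E W \<longleftrightarrow> (\<forall>x\<in>W. \<forall>y\<in>W. dist_in E W x y < \<infinity>)"

definition bridgeless_in :: "('a \<Rightarrow> 'a \<Rightarrow> bool) \<Rightarrow> 'a set \<Rightarrow> bool" where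
  "bridgeless_in E W \<longleftrightarrow> (\<forall>x\<in>W. \<forall>y\<in>W. E x y \<longrightarrow>
      connected_in (\<lambda>a b. E a b \<and> {a, b} \<noteq> {x, y}) W)"

text \<open>W is the vertex set of a 2-edge-connected component: a maximal connected bridgeless
  subgraph (maximal such subgraphs are induced, so it is determined by its vertex set).\<close>
definition two_edge_cc :: "('a \<Rightarrow> 'a \<Rightarrow> bool) \<Rightarrow> 'a set \<Rightarrow> 'a set \<Rightarrow> bool" where
  "two_edge_cc E V W \<longleftrightarrow> W \<subseteq> V \<and> W \<noteq> {} \<and> connected_in E W \<and> bridgeless_in E W \<and>
     (\<forall>W'. W \<subset> W' \<and> W' \<subseteq> V \<longrightarrow> \<not> (connected_in E W' \<and> bridgeless_in E W'))"

definition Tset :: "('a \<Rightarrow> 'a \<Rightarrow> bool) \<Rightarrow> 'a set \<Rightarrow> 'a set \<Rightarrow> 'a \<Rightarrow> 'a set" where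
  "Tset E V W u = {v \<in> (V - W) \<union> {u}. dist_in E ((V - W) \<union> {u}) u v < \<infinity>}"

definition indeg_H :: "('a \<Rightarrow> 'a set) \<Rightarrow> 'a set \<Rightarrow> 'a \<Rightarrow> nat" where
  "indeg_H s W u = card {w \<in> W. u \<in> s w}"

definition outdeg_H :: "('a \<Rightarrow> 'a set) \<Rightarrow> 'a set \<Rightarrow> 'a \<Rightarrow> nat" where
  "outdeg_H s W u = card (s u \<inter> W)"

definition two_path :: "'a set \<Rightarrow> ('a \<Rightarrow> 'a set) \<Rightarrow> 'a set \<Rightarrow> (nat \<Rightarrow> 'a) \<Rightarrow> nat \<Rightarrow> bool" where
  "two_path V s W u k \<longleftrightarrow> inj_on u {0..k} \<and> u ` {0..k} \<subseteq> W \<and>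
     (\<forall>i<k. gadj V s (u i) (u (Suc i))) \<and>
     (\<forall>i. 0 < i \<and> i < k \<longrightarrow> indeg_H s W (u i) = 1 \<and> outdeg_H s W (u i) = 1)"

definition is_cycle :: "('a \<Rightarrow> 'a \<Rightarrow> bool) \<Rightarrow> 'a set \<Rightarrow> 'a list \<Rightarrow> bool" where
  "is_cycle E V c \<longleftrightarrow> walk_in E V c \<and> distinct c \<and> length c \<ge> 3 \<and> E (last c) (hd c)"

definition girth :: "('a \<Rightarrow> 'a \<Rightarrow> bool) \<Rightarrow> 'a set \<Rightarrow> enat" where
  "girth E V = (INF c \<in> {c. is_cycle E V c}. enat (length c))"

end

theory Submission
  imports Defs
begin
lemma dist_le_walk:
  "walk_in E W p \<Longrightarrow> hd p = x \<Longrightarrow> last p = y \<Longrightarrow> dist_in E W x y \<le> enat (length p - 1)"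
  unfolding dist_in_def by (rule INF_lower) auto

lemma dist_attained:
  assumes "dist_in E W x y = enat n"
  shows "\<exists>p. walk_in E W p \<and> hd p = x \<and> last p = y \<and> length p = Suc n"
proof -
  let ?S = "{p. walk_in E W p \<and> hd p = x \<and> last p = y}"
  let ?f = "\<lambda>p. enat (length p - 1)"
  have ne: "?S \<noteq> {}"
  proof
    assume "?S = {}" then have "dist_in E W x y = \<infinity>" unfolding dist_in_def by (simp add: Inf_enat_def)
    with assms show False by simp
  qed
  then have "Inf (?f ` ?S) \<in> ?f ` ?S" unfolding Inf_enat_def
    by (auto intro: LeastI)
  then obtain p where p: "p \<in> ?S" "?f p = enat n" using assms unfolding dist_in_def by auto
  then have "p \<noteq> []" by (simp add: walk_in_def)
  with p show ?thesis by (intro exI[of _ p]) auto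
qed

lemma dist_fin_walk:
  assumes "dist_in E W x y \<noteq> \<infinity>"
  shows "\<exists>p. walk_in E W p \<and> hd p = x \<and> last p = y"
  using assms by (cases "dist_in E W x y") (auto dest: dist_attained)

lemma dist_refl: "x \<in> W \<Longrightarrow> dist_in E W x x = 0"
proof -
  assume "x \<in> W"
  then have "walk_in E W [x]" by (simp add: walk_in_def)
  from dist_le_walk[OF this] have "dist_in E W x x \<le> 0" by (simp add: zero_enat_def)
  then show ?thesis by simp
qed

lemma dist_step:
  assumes "E z y" "y \<in> W"
  shows "dist_in E W x y \<le> dist_in E W x z + 1"
proof (cases "dist_in E W x z")
  case (enat n)
  then obtain p where p: "walk_in E W p" "hd p = x" "last p = z" "length p = Suc n"
    using dist_attained[OF enat] by blast
  have w: "walk_in E W (p @ [y])"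
    using p assms unfolding walk_in_def
    apply (auto simp: nth_append)
    by (metis One_nat_def diff_Suc_1 last_conv_nth less_antisym list.size(3) nat.distinct(1))
  have "dist_in E W x y \<le> enat (length (p @ [y]) - 1)"
    by (rule dist_le_walk[OF w]) (use p in \<open>auto simp: hd_append\<close>)
  then show ?thesis using enat p by (simp add: one_enat_def)
qed simp

lemma dist_zero: "dist_in E W x y = 0 \<Longrightarrow> y = x \<and> x \<in> W"
proof -
  assume "dist_in E W x y = 0"
  then obtain p where p: "walk_in E W p" "hd p = x" "last p = y" "length p = 1"
    using dist_attained[of E W x y 0] by (auto simp: zero_enat_def)
  then obtain a where "p = [a]" by (cases p) auto
  with p show ?thesis by (auto simp: walk_in_def)
qed

lemma dist_pred:
  assumes "dist_in E W x y = enat n" "n > 0"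
  shows "\<exists>z. z \<in> W \<and> E z y \<and> dist_in E W x z = enat (n - 1)"
proof -
  obtain p where p: "walk_in E W p" "hd p = x" "last p = y" "length p = Suc n"
    using dist_attained[OF assms(1)] by blast
  let ?q = "butlast p" let ?z = "last ?q"
  have lq: "length ?q = n" using p by simp
  have qne: "?q \<noteq> []" using lq assms(2) by (metis length_0_conv less_numeral_extra(3))
  have q: "walk_in E W ?q" using p assms(2) lq qne unfolding walk_in_def
    by (auto simp: nth_butlast dest: in_set_butlastD)
  have pne: "p \<noteq> []" using p(4) by auto
  have hq: "hd ?q = x" using p lq assms(2) qne hd_conv_nth[OF pne]
    by (simp add: hd_conv_nth nth_butlast)
  have zW: "?z \<in> W" using q unfolding walk_in_def by auto
  have Ezy: "E ?z y"
  proof -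
    have pE: "\<forall>i. Suc i < length p \<longrightarrow> E (p ! i) (p ! Suc i)" using p(1) unfolding walk_in_def by blast
    have "Suc (n-1) < length p" using p(4) assms(2) by simp
    then have "E (p ! (n-1)) (p ! Suc (n-1))" using pE by blast
    moreover have "p ! (n-1) = ?z" using lq assms(2) qne
      by (simp add: last_conv_nth nth_butlast)
    moreover have "p ! Suc (n-1) = y" using p assms(2) pne by (simp add: last_conv_nth)
    ultimately show ?thesis by simp
  qed
  have le: "dist_in E W x ?z \<le> enat (n - 1)"
    using dist_le_walk[OF q hq refl] lq p(4) by simp
  have ge: "enat (n - 1) \<le> dist_in E W x ?z"
  proof (rule ccontr)
    assume "\<not> ?thesis"
    then have "dist_in E W x ?z < enat (n-1)" by simp
    then obtain m where m: "dist_in E W x ?z = enat m" "m < n - 1"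
      by (cases "dist_in E W x ?z") auto
    have yW: "y \<in> W" using p pne last_in_set[OF pne] unfolding walk_in_def by auto
    have "dist_in E W x y \<le> enat m + 1" using dist_step[of E ?z y W x, OF Ezy yW] m by simp
    with assms(1) m show False by (simp add: one_enat_def)
  qed
  show ?thesis using le ge zW Ezy by (intro exI[of _ ?z]) auto
qed

lemma dist_sym:
  assumes "\<And>a b. E a b \<Longrightarrow> E b a"
  shows "dist_in E W x y = dist_in E W y x"
proof -
  have *: "dist_in E W a b \<le> dist_in E W b a" for a b
  proof (cases "dist_in E W b a")
    case (enat n)
    then obtain p where p: "walk_in E W p" "hd p = b" "last p = a" "length p = Suc n"
      using dist_attained[OF enat] by blast
    have "walk_in E W (rev p)" unfolding walk_in_def
    proof (intro conjI allI impI)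
      show "rev p \<noteq> []" "set (rev p) \<subseteq> W" using p unfolding walk_in_def by auto
      fix t assume t: "Suc t < length (rev p)"
      define j where "j = length p - 2 - t"
      have j: "Suc j < length p" "rev p ! t = p ! Suc j" "rev p ! Suc t = p ! j"
        using t unfolding j_def by (auto simp: rev_nth Suc_diff_Suc numeral_2_eq_2)
      have "E (p ! j) (p ! Suc j)" using p(1) j(1) unfolding walk_in_def by blast
      then show "E (rev p ! t) (rev p ! Suc t)" using j assms by simp
    qed
    moreover have "hd (rev p) = a" "last (rev p) = b" using p
      by (auto simp: hd_rev last_rev)
    ultimately show ?thesis using dist_le_walk[of E W "rev p" a b] enat p by simp
  qed simp
  show ?thesis using *[of x y] *[of y x] by simp
qed

lemma dist_mono:
  assumes "W \<subseteq> W'" "\<And>a b. a \<in> W \<Longrightarrow> b \<in> W \<Longrightarrow> E a b \<Longrightarrow> E' a b"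
  shows "dist_in E' W' x y \<le> dist_in E W x y"
  unfolding dist_in_def
proof (rule INF_mono)
  fix p assume "p \<in> {p. walk_in E W p \<and> hd p = x \<and> last p = y}"
  then have "p \<in> {p. walk_in E' W' p \<and> hd p = x \<and> last p = y}"
    using assms unfolding walk_in_def by (auto simp: subset_iff)
  then show "\<exists>q\<in>{p. walk_in E' W' p \<and> hd p = x \<and> last p = y}. enat (length q - 1) \<le> enat (length p - 1)"
    by blast
qed

lemma dist_tri:
  assumes "y \<in> W"
  shows "dist_in E W x z \<le> dist_in E W x y + dist_in E W y z"
proof (cases "dist_in E W y z")
  case (enat n)
  then show ?thesis
  proof (induction n arbitrary: z)
    case 0
    then have "z = y" using dist_zero[of E W y z] by (simp add: zero_enat_def)
    then show ?case by simp
  next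
    case (Suc n)
    obtain w where w: "w \<in> W" "E w z" "dist_in E W y w = enat n"
      using dist_pred[OF Suc.prems] by auto
    have zW: "z \<in> W" using Suc.prems dist_attained[OF Suc.prems] unfolding walk_in_def
      by (metis Nil_is_append_conv append_butlast_last_id in_set_conv_decomp subsetD)
    have "dist_in E W x z \<le> dist_in E W x w + 1" by (rule dist_step[of E w z W x, OF w(2) zW])
    also have "\<dots> \<le> dist_in E W x y + enat n + 1" using Suc.IH[OF w(3)] w(3) by (simp add: add_right_mono)
    finally show ?case using Suc.prems by (simp add: one_enat_def add.assoc)
  qed
qed simp

lemma shortest_distinct:
  assumes d: "dist_in E W x y = enat n" and p: "walk_in E W p" "hd p = x" "last p = y" "length p = Suc n"
  shows "distinct p"
proof (rule ccontr)
  assume "\<not> distinct p"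
  then obtain a b where ab: "a < b" "b < length p" "p ! a = p ! b"
    unfolding distinct_conv_nth by (metis linorder_neqE_nat)
  define q where "q = take a p @ drop b p"
  have lq: "length q = a + (length p - b)" using ab unfolding q_def by simp
  have nth_q: "q ! t = (if t < a then p ! t else p ! (b + t - a))" if "t < length q" for t
    using ab that unfolding q_def by (auto simp: nth_append)
  have wq: "walk_in E W q"
    unfolding walk_in_def
  proof (intro conjI allI impI)
    have "length q > 0" using lq ab by simp
    then show "q \<noteq> []" by auto
    have "set q \<subseteq> set p" unfolding q_def using set_take_subset[of a p] set_drop_subset[of b p] by auto
    then show "set q \<subseteq> W" using p(1) unfolding walk_in_def by auto
    fix t assume t: "Suc t < length q"
    have E: "\<And>t. Suc t < length p \<Longrightarrow> E (p ! t) (p ! Suc t)" using p(1) unfolding walk_in_def by auto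
    show "E (q ! t) (q ! Suc t)"
    proof (cases "Suc t < a")
      case True then show ?thesis using nth_q[of t] nth_q[of "Suc t"] t E[of t] ab by auto
    next
      case False
      show ?thesis
      proof (cases "Suc t = a")
        case True
        then have "q ! t = p ! t" "q ! Suc t = p ! Suc t" using nth_q[of t] nth_q[of "Suc t"] t ab by auto
        then show ?thesis using E[of t] True ab by auto
      next
        case False2: False
        then have "q ! t = p ! (b + t - a)" "q ! Suc t = p ! Suc (b + t - a)"
          using nth_q[of t] nth_q[of "Suc t"] t \<open>\<not> Suc t < a\<close> ab by (auto simp: Suc_diff_le)
        moreover have "Suc (b + t - a) < length p" using t lq False False2 by auto
        ultimately show ?thesis using E by auto
      qed
    qed
  qed
  have pne: "p \<noteq> []" using p(4) by auto
  have hq: "hd q = x"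
  proof (cases "a = 0")
    case True
    then show ?thesis using ab p hd_conv_nth[OF pne] unfolding q_def by (simp add: hd_drop_conv_nth)
  next
    case False
    then show ?thesis using ab p hd_conv_nth[OF pne] unfolding q_def by (simp add: hd_conv_nth nth_append)
  qed
  have lastq: "last q = y" using ab p unfolding q_def by simp
  have "dist_in E W x y \<le> enat (length q - 1)" by (rule dist_le_walk[OF wq hq lastq])
  with d lq ab p(4) show False by simp
qed

lemma connected_mono:
  "connected_in E1 W \<Longrightarrow> (\<And>a b. a \<in> W \<Longrightarrow> b \<in> W \<Longrightarrow> E1 a b \<Longrightarrow> E2 a b) \<Longrightarrow> connected_in E2 W"
  unfolding connected_in_def using dist_mono[of W W E1 E2]
  by (meson order.strict_trans1 order_refl)

lemma enat_le_fin: "(a::enat) \<le> b + c \<Longrightarrow> b \<noteq> \<infinity> \<Longrightarrow> c \<noteq> \<infinity> \<Longrightarrow> a \<noteq> \<infinity>"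
  by (cases a; cases b; cases c) auto

lemma potential:
  assumes aW: "a \<in> W" and f0: "f a = 0"
    and lip: "\<And>x y. x \<in> W \<Longrightarrow> y \<in> W \<Longrightarrow> E x y \<Longrightarrow> f y \<le> f x + 1"
    and pred: "\<And>z. z \<in> W \<Longrightarrow> z \<noteq> a \<Longrightarrow> f z \<noteq> \<infinity> \<Longrightarrow> \<exists>x\<in>W. E x z \<and> f x + 1 \<le> f z"
    and zW: "z \<in> W"
  shows "dist_in E W a z = f z"
proof (rule antisym)
  show "f z \<le> dist_in E W a z"
  proof (cases "dist_in E W a z")
    case (enat n)
    then show ?thesis using zW
    proof (induction n arbitrary: z)
      case 0
      then have "z = a" using dist_zero[of E W a z] by (simp add: zero_enat_def)
      then show ?case using f0 by simp
    next
      case (Suc n)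
      obtain w where w: "w \<in> W" "E w z" "dist_in E W a w = enat n"
        using dist_pred[OF Suc.prems(1)] by auto
      have "f z \<le> f w + 1" by (rule lip[OF w(1) Suc.prems(2) w(2)])
      also have "\<dots> \<le> enat n + 1" using Suc.IH[OF w(3) w(1)] w(3) by (simp add: add_right_mono)
      finally show ?case using Suc.prems by (simp add: one_enat_def)
    qed
  qed simp
next
  show "dist_in E W a z \<le> f z"
  proof (cases "f z")
    case (enat m)
    then show ?thesis using zW
    proof (induction m arbitrary: z rule: less_induct)
      case (less m)
      show ?case
      proof (cases "z = a")
        case True
        then show ?thesis using dist_refl[OF aW] by simp
      next
        case False
        obtain x where x: "x \<in> W" "E x z" "f x + 1 \<le> f z"
          using pred[OF less.prems(2) False] less.prems(1) by auto
        then obtain m' where m': "f x = enat m'" "m' < m" using less.prems(1)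
          by (cases "f x") (auto simp: one_enat_def)
        have "dist_in E W a z \<le> dist_in E W a x + 1" by (rule dist_step[of E x z W a, OF x(2) less.prems(2)])
        also have "\<dots> \<le> f x + 1" using less.IH[OF m'(2) m'(1) x(1)] m'(1) by (simp add: add_right_mono)
        also have "\<dots> \<le> f z" by (rule x(3))
        finally show ?thesis .
      qed
    qed
  qed simp
qed

lemma enat_lt_inf: "(x::enat) < \<infinity> \<longleftrightarrow> x \<noteq> \<infinity>" by (cases x) auto

lemma enat_le_fin2: "(a::enat) \<le> b \<Longrightarrow> b \<noteq> \<infinity> \<Longrightarrow> a \<noteq> \<infinity>" by (cases a; cases b) auto

locale NG =
  fixes V :: "'a set" and s :: "'a \<Rightarrow> 'a set" and \<alpha> :: real
    and W :: "'a set" and u :: "nat \<Rightarrow> 'a" and k i :: nat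
  assumes finV: "finite V" and apos: "\<alpha> > 0"
    and NE: "nash_equilibrium \<alpha> V s"
    and H: "two_edge_cc (gadj V s) V W" and nontriv: "card W \<ge> 3"
    and path: "two_path V s W u k"
    and orient: "\<forall>j<k. u (Suc j) \<in> s (u j)"
    and gir: "enat (2 * k) \<le> girth (gadj V s) V"
    and ik: "i + 2 \<le> k"
begin

abbreviation "E \<equiv> gadj V s"
definition "R j = (V - W) \<union> {u j}"
definition "A j = Tset E V W (u j)"
definition "Pbar = (\<Union>j\<in>{0<..<k}. A j)"
definition "Q = V - Pbar"

lemma sv: "x \<in> V \<Longrightarrow> s x \<subseteq> V - {x}"
  using NE unfolding nash_equilibrium_def strategy_vector_def by blast

lemma Esym: "E a b \<Longrightarrow> E b a"
  unfolding gadj_def by auto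

lemma EV: "E a b \<Longrightarrow> a \<in> V \<and> b \<in> V"
  unfolding gadj_def by auto

lemma WV: "W \<subseteq> V"
  using H unfolding two_edge_cc_def by blast

lemma uW: "j \<le> k \<Longrightarrow> u j \<in> W"
  using path unfolding two_path_def by auto

lemma uV: "j \<le> k \<Longrightarrow> u j \<in> V"
  using uW WV by blast

lemma uinj: "j \<le> k \<Longrightarrow> l \<le> k \<Longrightarrow> u j = u l \<longleftrightarrow> j = l"
  using path unfolding two_path_def inj_on_def by auto

lemma Epath: "j < k \<Longrightarrow> E (u j) (u (Suc j))"
  using orient uV[of j] uV[of "Suc j"] unfolding gadj_def by auto

lemma card1: "card S = 1 \<Longrightarrow> a \<in> S \<Longrightarrow> S = {a}"
  by (metis card_1_singletonE singletonD)

lemma nbrW: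
  assumes j: "0 < j" "j < k" and yW: "y \<in> W" and Ey: "E (u j) y"
  shows "y = u (j - 1) \<or> y = u (Suc j)"
proof -
  have deg: "indeg_H s W (u j) = 1" "outdeg_H s W (u j) = 1"
    using path j unfolding two_path_def by auto
  have "u (Suc (j - 1)) \<in> s (u (j - 1))" using orient[rule_format, of "j - 1"] j by auto
  then have "u j \<in> s (u (j - 1))" using j by simp
  then have in1: "{w \<in> W. u j \<in> s w} = {u (j - 1)}"
    using deg(1) uW[of "j - 1"] j unfolding indeg_H_def by (intro card1) auto
  have "u (Suc j) \<in> s (u j)" using orient j by auto
  then have out1: "s (u j) \<inter> W = {u (Suc j)}"
    using deg(2) uW[of "Suc j"] j unfolding outdeg_H_def by (intro card1) auto
  from Ey have "y \<in> s (u j) \<or> u j \<in> s y" unfolding gadj_def by auto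
  then show ?thesis using in1 out1 yW by blast
qed

lemma A_iff: "z \<in> A j \<longleftrightarrow> z \<in> R j \<and> dist_in E (R j) (u j) z < \<infinity>"
  unfolding A_def Tset_def R_def by auto

lemma A_iff': "z \<in> A j \<longleftrightarrow> z \<in> R j \<and> dist_in E (R j) (u j) z \<noteq> \<infinity>"
  unfolding A_iff enat_lt_inf ..

lemma A_R: "A j \<subseteq> R j" using A_iff by auto

lemma R_V: "j \<le> k \<Longrightarrow> R j \<subseteq> V" unfolding R_def using uV by auto

lemma uA: "j \<le> k \<Longrightarrow> u j \<in> A j"
  unfolding A_iff R_def using dist_refl[of "u j" "(V - W) \<union> {u j}" E] by simp

lemma AW: "z \<in> A j \<Longrightarrow> z \<in> W \<Longrightarrow> z = u j"
  using A_R unfolding R_def by auto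

lemma A_ext:
  assumes "z \<in> A j" "E z y" "y \<notin> W"
  shows "y \<in> A j"
proof -
  have yR: "y \<in> R j" using assms EV unfolding R_def by auto
  have "dist_in E (R j) (u j) y \<le> dist_in E (R j) (u j) z + 1"
    by (rule dist_step[of E z y "R j" "u j", OF assms(2) yR])
  moreover have "dist_in E (R j) (u j) z \<noteq> \<infinity>" using assms(1) A_iff' by auto
  ultimately have "dist_in E (R j) (u j) y \<noteq> \<infinity>"
    using enat_le_fin by (metis infinity_ne_i1)
  then show ?thesis using yR A_iff' by simp
qed

end

context NG begin

lemma claimC:
  assumes j: "0 < j" "j < k" and xA: "x \<in> A j" and xne: "x \<noteq> u j"
    and Exy: "E x y" and yW: "y \<in> W"
  shows "y = u j"
proof (rule ccontr)
  assume yne: "y \<noteq> u j"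
  have ujW: "u j \<in> W" using uW j by simp
  from xA have "dist_in E (R j) (u j) x \<noteq> \<infinity>" by (simp add: A_iff')
  then obtain n where n: "dist_in E (R j) (u j) x = enat n" by auto
  have n0: "n > 0"
  proof (rule ccontr)
    assume "\<not> n > 0"
    then have "dist_in E (R j) (u j) x = 0" using n by (simp add: zero_enat_def)
    then show False using dist_zero[of E "R j" "u j" x] xne by simp
  qed
  obtain p where p: "walk_in E (R j) p" "hd p = u j" "last p = x" "length p = Suc n"
    using dist_attained[OF n] by blast
  have dp: "distinct p" using shortest_distinct[OF n p] .
  have pne: "p \<noteq> []" using p(4) by auto
  have p0: "p ! 0 = u j" using p(2) pne by (simp add: hd_conv_nth)
  have pn: "p ! n = x" using p(3) p(4) pne by (simp add: last_conv_nth)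
  have pR: "set p \<subseteq> R j" using p(1) unfolding walk_in_def by blast
  have pE: "\<And>t. t < n \<Longrightarrow> E (p ! t) (p ! Suc t)" using p(1) p(4) unfolding walk_in_def by auto
  have pmem: "\<And>t. t \<le> n \<Longrightarrow> p ! t \<in> set p" using p(4) by auto
  have pnotW: "p ! t \<notin> W" if t: "0 < t" "t \<le> n" for t
  proof -
    have "p ! t \<in> R j" using pR pmem[OF t(2)] by blast
    moreover have "p ! t \<noteq> u j" using dp t p(4) p0 nth_eq_iff_index_eq[of p t 0] by auto
    ultimately show "p ! t \<notin> W" by (auto simp: R_def)
  qed
  have xnW: "x \<notin> W" using pnotW[of n] n0 pn by auto
  have ynp: "y \<notin> set p"
  proof
    assume "y \<in> set p"
    then obtain t where t: "t < length p" "p ! t = y" by (auto simp: in_set_conv_nth)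
    show False
    proof (cases "t = 0")
      case True then show False using t p0 yne by simp
    next
      case False then show False using t pnotW[of t] yW p(4) by auto
    qed
  qed
  define W' where "W' = W \<union> set p"
  have W'V: "W' \<subseteq> V" using WV pR R_V[of j] j unfolding W'_def by auto
  have xp: "x \<in> set p" using pmem[of n] pn by auto
  have sub: "W \<subset> W'" using xp xnW unfolding W'_def by auto
  have ujW': "u j \<in> W'" "y \<in> W'" using ujW yW unfolding W'_def by auto
  have key: "connected_in (\<lambda>c d. E c d \<and> {c, d} \<noteq> {a, b}) W'" for a b
  proof -
    define F where "F = (\<lambda>c d. E c d \<and> {c, d} \<noteq> {a, b})"
    have Fsym: "\<And>c d. F c d \<Longrightarrow> F d c" unfolding F_def using Esym by (auto simp: insert_commute)
    have cW: "connected_in F W"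
    proof (cases "a \<in> W \<and> b \<in> W \<and> E a b")
      case True
      then show ?thesis using H unfolding two_edge_cc_def bridgeless_in_def F_def by blast
    next
      case False
      have "connected_in E W" using H unfolding two_edge_cc_def by blast
      then show ?thesis
      proof (rule connected_mono)
        fix c d assume cd: "c \<in> W" "d \<in> W" "E c d"
        have "{c, d} \<noteq> {a, b}"
        proof
          assume "{c, d} = {a, b}"
          then have "(c = a \<and> d = b) \<or> (c = b \<and> d = a)" by (auto simp: doubleton_eq_iff)
          then show False using False cd Esym by auto
        qed
        then show "F c d" using cd unfolding F_def by simp
      qed
    qed
    have dW: "dist_in F W' (u j) z \<noteq> \<infinity>" if "z \<in> W" for z
    proof -
      have "dist_in F W' (u j) z \<le> dist_in F W (u j) z"
        by (rule dist_mono) (auto simp: W'_def)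
      moreover have "dist_in F W (u j) z < \<infinity>" using cW ujW that unfolding connected_in_def by blast
      ultimately show ?thesis using enat_le_fin2 by (auto simp: enat_lt_inf)
    qed
    have fwd: "m \<le> n \<Longrightarrow> (\<forall>t<m. {p ! t, p ! Suc t} \<noteq> {a, b}) \<Longrightarrow> dist_in F W' (u j) (p ! m) \<noteq> \<infinity>" for m
    proof (induction m)
      case 0
      show ?case using p0 dist_refl[of "u j" W' F] ujW' by simp
    next
      case (Suc m)
      have "F (p ! m) (p ! Suc m)" using pE[of m] Suc.prems by (auto simp: F_def)
      moreover have "p ! Suc m \<in> W'" using pmem[OF Suc.prems(1)] unfolding W'_def by blast
      ultimately have "dist_in F W' (u j) (p ! Suc m) \<le> dist_in F W' (u j) (p ! m) + 1"
        by (rule dist_step[of F "p ! m" "p ! Suc m" W' "u j"])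
      moreover have "dist_in F W' (u j) (p ! m) \<noteq> \<infinity>" using Suc by auto
      ultimately show ?case using enat_le_fin by (metis infinity_ne_i1)
    qed
    have bwd: "{x, y} \<noteq> {a, b} \<Longrightarrow> d \<le> n \<Longrightarrow> (\<forall>t. n - d \<le> t \<longrightarrow> t < n \<longrightarrow> {p ! t, p ! Suc t} \<noteq> {a, b})
        \<Longrightarrow> dist_in F W' y (p ! (n - d)) \<noteq> \<infinity>" for d
    proof (induction d)
      case 0
      have "F y x" using Exy Esym 0 by (auto simp: F_def insert_commute)
      moreover have "x \<in> W'" using xp unfolding W'_def by blast
      ultimately have "dist_in F W' y x \<le> dist_in F W' y y + 1"
        by (rule dist_step[of F y x W' y])
      moreover have "dist_in F W' y y = 0" by (rule dist_refl[OF ujW'(2)])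
      ultimately have "dist_in F W' y x \<le> 1" by simp
      then show ?case using pn enat_le_fin2[of _ 1] by simp
    next
      case (Suc d)
      define m where "m = n - Suc d"
      have m: "m < n" "Suc m = n - d" using Suc.prems unfolding m_def by auto
      have "{p ! m, p ! Suc m} \<noteq> {a, b}" using Suc.prems(3) m(1) unfolding m_def[symmetric] by blast
      then have "F (p ! Suc m) (p ! m)" using pE[OF m(1)] Esym by (auto simp: F_def insert_commute)
      moreover have "p ! m \<in> W'" using pmem[of m] m unfolding W'_def by auto
      ultimately have "dist_in F W' y (p ! m) \<le> dist_in F W' y (p ! Suc m) + 1"
        by (rule dist_step[of F "p ! Suc m" "p ! m" W' y])
      moreover have "dist_in F W' y (p ! (n - d)) \<noteq> \<infinity>"
        using Suc.IH Suc.prems by auto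
      ultimately show ?case using m enat_le_fin unfolding m_def by (metis infinity_ne_i1)
    qed
    have uniq: "t1 = t2" if "t1 < n" "t2 < n" "{p ! t1, p ! Suc t1} = {p ! t2, p ! Suc t2}" for t1 t2
      using that dp p(4) by (auto simp: doubleton_eq_iff nth_eq_iff_index_eq)
    have dP: "dist_in F W' (u j) (p ! m) \<noteq> \<infinity>" if m: "m \<le> n" for m
    proof (cases "\<exists>t0<n. {p ! t0, p ! Suc t0} = {a, b}")
      case False then show ?thesis using fwd[OF m] m by auto
    next
      case True
      then obtain t0 where t0: "t0 < n" "{p ! t0, p ! Suc t0} = {a, b}" by blast
      have xy: "{x, y} \<noteq> {a, b}"
      proof
        assume "{x, y} = {a, b}"
        then have "y \<in> {p ! t0, p ! Suc t0}" using t0 by auto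
        then have "y = p ! t0 \<or> y = p ! Suc t0" by blast
        then have "y \<in> set p" using pmem[of t0] pmem[of "Suc t0"] t0 by auto
        then show False using ynp by simp
      qed
      show ?thesis
      proof (cases "m \<le> t0")
        case True
        have "\<forall>t<m. {p ! t, p ! Suc t} \<noteq> {a, b}"
        proof (intro allI impI notI)
          fix t assume "t < m" "{p ! t, p ! Suc t} = {a, b}"
          then have "t = t0" using uniq[of t t0] t0 True m by simp
          then show False using \<open>t < m\<close> True by simp
        qed
        then show ?thesis using fwd m by blast
      next
        case False
        have "\<forall>t. n - (n - m) \<le> t \<longrightarrow> t < n \<longrightarrow> {p ! t, p ! Suc t} \<noteq> {a, b}"
        proof (intro allI impI notI)
          fix t assume "n - (n - m) \<le> t" "t < n" "{p ! t, p ! Suc t} = {a, b}"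
          then have "t = t0" using uniq[of t t0] t0 by simp
          then show False using \<open>n - (n - m) \<le> t\<close> False m by simp
        qed
        then have "dist_in F W' y (p ! (n - (n - m))) \<noteq> \<infinity>" using bwd[OF xy] by simp
        then have d2: "dist_in F W' y (p ! m) \<noteq> \<infinity>" using m by simp
        have "dist_in F W' (u j) (p ! m) \<le> dist_in F W' (u j) y + dist_in F W' y (p ! m)"
          by (rule dist_tri[OF ujW'(2)])
        then show ?thesis using d2 dW[OF yW] enat_le_fin by blast
      qed
    qed
    have all: "dist_in F W' (u j) z \<noteq> \<infinity>" if "z \<in> W'" for z
    proof (cases "z \<in> W")
      case True then show ?thesis using dW by blast
    next
      case False
      then have "z \<in> set p" using that unfolding W'_def by blast
      then obtain m where "m < length p" "z = p ! m" by (auto simp: in_set_conv_nth)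
      then show ?thesis using dP[of m] p(4) by auto
    qed
    have "connected_in F W'" unfolding connected_in_def
    proof (intro ballI)
      fix z1 z2 assume z: "z1 \<in> W'" "z2 \<in> W'"
      have "dist_in F W' z1 z2 \<le> dist_in F W' z1 (u j) + dist_in F W' (u j) z2"
        by (rule dist_tri[OF ujW'(1)])
      moreover have "dist_in F W' z1 (u j) = dist_in F W' (u j) z1"
        by (rule dist_sym[OF Fsym])
      ultimately show "dist_in F W' z1 z2 < \<infinity>" using all z enat_le_fin by (metis enat_lt_inf)
    qed
    then show ?thesis unfolding F_def .
  qed
  have "bridgeless_in E W'" unfolding bridgeless_in_def using key by blast
  moreover have "connected_in E W'" using key[of undefined undefined] by (rule connected_mono) auto
  ultimately show False using H sub W'V unfolding two_edge_cc_def by blast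
qed

end

context NG begin

lemma closure:
  assumes j: "0 < j" "j < k" and zA: "z \<in> A j" and Ezy: "E z y"
  shows "y \<in> A j \<or> (z = u j \<and> (y = u (j - 1) \<or> y = u (Suc j)))"
proof (cases "y \<in> W")
  case False
  then show ?thesis using A_ext[OF zA Ezy] by simp
next
  case True
  show ?thesis
  proof (cases "z = u j")
    case True
    then show ?thesis using nbrW[OF j \<open>y \<in> W\<close>] Ezy by simp
  next
    case False
    have "y = u j" using claimC[OF j zA False Ezy \<open>y \<in> W\<close>] .
    then show ?thesis using uA j by simp
  qed
qed

lemma uA_idx: "a \<le> k \<Longrightarrow> j \<le> k \<Longrightarrow> u a \<in> A j \<Longrightarrow> a = j"
  using AW[of "u a" j] uW[of a] uinj[of a j] by auto

lemma disjoint: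
  assumes j: "0 < j" "j < k" and l: "0 < l" "l < k" and jl: "j \<noteq> l"
  shows "A j \<inter> A l = {}"
proof -
  have "z \<notin> A j" if zl: "z \<in> A l" for z
  proof -
    from zl obtain n where n: "dist_in E (R l) (u l) z = enat n" by (auto simp: A_iff')
    show ?thesis using n zl
    proof (induction n arbitrary: z)
      case 0
      then have "z = u l" using dist_zero[of E "R l" "u l" z] by (simp add: zero_enat_def)
      then show ?case using uA_idx[of l j] l j jl by auto
    next
      case (Suc n)
      obtain w where w: "w \<in> R l" "E w z" "dist_in E (R l) (u l) w = enat n"
        using dist_pred[OF Suc.prems(1)] by auto
      have wl: "w \<in> A l" using w by (auto simp: A_iff')
      show ?case
      proof
        assume zj: "z \<in> A j"
        from closure[OF j zj Esym[OF w(2)]]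
        have "w \<in> A j \<or> z = u j" by blast
        then show False
        proof
          assume "w \<in> A j" then show False using Suc.IH[OF w(3) wl] by simp
        next
          assume "z = u j"
          then have "u j \<in> A l" using Suc.prems by simp
          then show False using uA_idx[of j l] j l jl by simp
        qed
      qed
    qed
  qed
  then show ?thesis by blast
qed

definition "idx z = (THE j. 0 < j \<and> j < k \<and> z \<in> A j)"

lemma idx_eq: "0 < j \<Longrightarrow> j < k \<Longrightarrow> z \<in> A j \<Longrightarrow> idx z = j"
  unfolding idx_def
  by (rule the_equality) (use disjoint in blast)+

lemma Pbar_iff: "z \<in> Pbar \<longleftrightarrow> (\<exists>j. 0 < j \<and> j < k \<and> z \<in> A j)"
  unfolding Pbar_def by auto

lemma Pbar_idx: "z \<in> Pbar \<Longrightarrow> 0 < idx z \<and> idx z < k \<and> z \<in> A (idx z)"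
  using Pbar_iff idx_eq by metis

lemma A_V: "j \<le> k \<Longrightarrow> A j \<subseteq> V" using A_R R_V by blast

lemma Pbar_V: "Pbar \<subseteq> V"
proof
  fix z assume "z \<in> Pbar"
  then obtain j where "0 < j" "j < k" "z \<in> A j" using Pbar_iff by auto
  then show "z \<in> V" using A_V[of j] by auto
qed

lemma V_split: "V = Pbar \<union> Q" "Pbar \<inter> Q = {}" using Pbar_V unfolding Q_def by auto

lemma u_Pbar: "0 < j \<Longrightarrow> j < k \<Longrightarrow> u j \<in> Pbar" using Pbar_iff uA by auto

lemma u_Q: "j = 0 \<or> j = k \<Longrightarrow> u j \<in> Q"
proof -
  assume j: "j = 0 \<or> j = k"
  have "u j \<notin> Pbar"
  proof
    assume "u j \<in> Pbar"
    then obtain l where "0 < l" "l < k" "u j \<in> A l" using Pbar_iff by auto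
    then show False using uA_idx[of j l] j by auto
  qed
  then show "u j \<in> Q" using uV[of j] j unfolding Q_def by auto
qed

lemma u_idx: "0 < j \<Longrightarrow> j < k \<Longrightarrow> idx (u j) = j"
  using idx_eq uA by simp

lemma edge_class:
  assumes "E x y"
  shows "(x \<in> Q \<and> y \<in> Q) \<or> (\<exists>j. 0 < j \<and> j < k \<and> x \<in> A j \<and> y \<in> A j)
     \<or> (\<exists>j<k. (x = u j \<and> y = u (Suc j)) \<or> (y = u j \<and> x = u (Suc j)))"
proof -
  have c: "(\<exists>j. 0 < j \<and> j < k \<and> a \<in> A j \<and> b \<in> A j)
     \<or> (\<exists>j<k. (a = u j \<and> b = u (Suc j)) \<or> (b = u j \<and> a = u (Suc j)))"
    if ab: "E a b" "a \<in> Pbar" for a b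
  proof -
    obtain j where j: "0 < j" "j < k" "a \<in> A j" using ab Pbar_iff by auto
    from closure[OF j ab(1)] have "b \<in> A j \<or> (a = u j \<and> (b = u (j - 1) \<or> b = u (Suc j)))" .
    then show ?thesis
    proof (elim disjE conjE)
      assume "b \<in> A j" then show ?thesis using j by blast
    next
      assume "a = u j" "b = u (j - 1)"
      then show ?thesis using j by (intro disjI2 exI[of _ "j - 1"]) auto
    next
      assume "a = u j" "b = u (Suc j)"
      then show ?thesis using j by blast
    qed
  qed
  show ?thesis
  proof (cases "x \<in> Pbar")
    case True then show ?thesis using c[OF assms True] by blast
  next
    case False
    show ?thesis
    proof (cases "y \<in> Pbar")
      case True then show ?thesis using c[OF Esym[OF assms] True] by blast
    next
      case False
      then show ?thesis using \<open>x \<notin> Pbar\<close> EV[OF assms] unfolding Q_def by blast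
    qed
  qed
qed

definition "h j z = dist_in E (R j) (u j) z"

lemma h_fin: "z \<in> A j \<Longrightarrow> h j z \<noteq> \<infinity>" unfolding h_def by (simp add: A_iff')

lemma h_u: "j \<le> k \<Longrightarrow> h j (u j) = 0" unfolding h_def R_def by (rule dist_refl) simp

lemma h_lip: "y \<in> A j \<Longrightarrow> E x y \<Longrightarrow> h j y \<le> h j x + 1"
  unfolding h_def using A_R by (intro dist_step[of E x y "R j" "u j"]) auto

lemma h_zero: "h j z = 0 \<Longrightarrow> z = u j"
  unfolding h_def using dist_zero by metis

lemma h_pred:
  assumes "z \<in> A j" "h j z = enat n" "n > 0"
  shows "\<exists>w\<in>A j. E w z \<and> h j w = enat (n - 1)"
proof -
  obtain w where w: "w \<in> R j" "E w z" "dist_in E (R j) (u j) w = enat (n - 1)"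
    using dist_pred[of E "R j" "u j" z n] assms unfolding h_def by auto
  then have "w \<in> A j" by (auto simp: A_iff')
  then show ?thesis using w unfolding h_def by blast
qed

end

lemma sum_enat_fin: "finite S \<Longrightarrow> (\<And>x. x \<in> S \<Longrightarrow> f x \<noteq> \<infinity>) \<Longrightarrow> sum f S \<noteq> (\<infinity>::enat)"
  by (induction S rule: finite_induct) (auto simp: plus_eq_infty_iff_enat)

lemma sum_enat_fin_mem: "finite S \<Longrightarrow> x \<in> S \<Longrightarrow> sum f S \<noteq> \<infinity> \<Longrightarrow> f x \<noteq> (\<infinity>::enat)"
  by (simp add: sum.remove plus_eq_infty_iff_enat)

lemma girth_le: "is_cycle E V c \<Longrightarrow> girth E V \<le> enat (length c)"
  unfolding girth_def by (rule INF_lower) simp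

context NG begin

lemma k2: "k \<ge> 2" using ik by simp

lemma Dk: "enat k \<le> dist_in E Q (u 0) (u k)"
proof (cases "dist_in E Q (u 0) (u k)")
  case (enat d)
  obtain p where p: "walk_in E Q p" "hd p = u 0" "last p = u k" "length p = Suc d"
    using dist_attained[OF enat] by blast
  have dp: "distinct p" using shortest_distinct[OF enat p] .
  have pne: "p \<noteq> []" using p(4) by auto
  have d1: "d \<ge> 1"
  proof (rule ccontr)
    assume "\<not> d \<ge> 1"
    then have "d = 0" by simp
    then obtain a where "p = [a]" using p(4) by (cases p) auto
    then have "u 0 = u k" using p by simp
    then show False using uinj[of 0 k] k2 by simp
  qed
  define c where "c = p @ map (\<lambda>t. u (k - t)) [1..<k]"
  have lc: "length c = Suc d + (k - 1)" unfolding c_def using p(4) by simp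
  have cn: "c ! t = (if t < Suc d then p ! t else u (k - Suc (t - Suc d)))" if "t < length c" for t
    using that p(4) lc unfolding c_def by (auto simp: nth_append)
  have pQ: "set p \<subseteq> Q" using p(1) unfolding walk_in_def by blast
  have QV: "Q \<subseteq> V" unfolding Q_def by blast
  have pd: "p ! d = u k" using p(3) p(4) pne by (simp add: last_conv_nth)
  have p0: "p ! 0 = u 0" using p(2) pne by (simp add: hd_conv_nth)
  have wc: "walk_in E V c" unfolding walk_in_def
  proof (intro conjI allI impI)
    show "c \<noteq> []" unfolding c_def using pne by simp
    have "set (map (\<lambda>t. u (k - t)) [1..<k]) \<subseteq> V" using uV by auto
    then show "set c \<subseteq> V" unfolding c_def using pQ QV by auto
    fix t assume t: "Suc t < length c"
    show "E (c ! t) (c ! Suc t)"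
    proof (cases "Suc t < Suc d")
      case True
      then show ?thesis using cn[of t] cn[of "Suc t"] t p(1) p(4) unfolding walk_in_def by auto
    next
      case False
      show ?thesis
      proof (cases "t = d")
        case True
        have "E (u (k - 1)) (u (Suc (k - 1)))" using Epath[of "k - 1"] k2 by simp
        then have "E (u k) (u (k - 1))" using Esym k2 by simp
        then show ?thesis using cn[of t] cn[of "Suc t"] t True pd by simp
      next
        case False2: False
        define m where "m = t - Suc d"
        have tm: "t = Suc d + m" "Suc (Suc m) < k" using False False2 t lc unfolding m_def by auto
        have "E (u (k - Suc (Suc m))) (u (Suc (k - Suc (Suc m))))" using Epath[of "k - Suc (Suc m)"] tm by simp
        moreover have "Suc (k - Suc (Suc m)) = k - Suc m" using tm by simp
        ultimately have "E (u (k - Suc m)) (u (k - Suc (Suc m)))" using Esym by simp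
        moreover have "c ! t = u (k - Suc m)" "c ! Suc t = u (k - Suc (Suc m))"
          using cn[of t] cn[of "Suc t"] t tm by auto
        ultimately show ?thesis by simp
      qed
    qed
  qed
  have dc: "distinct c"
  proof -
    have "inj_on (\<lambda>t. u (k - t)) (set [1..<k])"
      by (rule inj_onI) (use uinj in auto)
    then have d2: "distinct (map (\<lambda>t. u (k - t)) [1..<k])" by (simp add: distinct_map)
    have "set (map (\<lambda>t. u (k - t)) [1..<k]) \<subseteq> Pbar" using u_Pbar by auto
    then have "set p \<inter> set (map (\<lambda>t. u (k - t)) [1..<k]) = {}" using pQ V_split by blast
    then show ?thesis unfolding c_def using dp d2 by simp
  qed
  have lastc: "last c = u 1"
  proof -
    have "[1..<k] \<noteq> []" using k2 by simp
    then have "last (map (\<lambda>t. u (k - t)) [1..<k]) = u (k - (k - 1))" using k2 by (simp add: last_map)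
    then show ?thesis unfolding c_def using k2 by simp
  qed
  have hdc: "hd c = u 0" unfolding c_def using p pne by simp
  have "E (last c) (hd c)" using lastc hdc Epath[of 0] k2 Esym by simp
  then have "is_cycle E V c" unfolding is_cycle_def using wc dc lc d1 k2 by simp
  then have "girth E V \<le> enat (length c)" by (rule girth_le)
  then have "enat (2 * k) \<le> enat (Suc d + (k - 1))" using gir lc by (metis order.trans)
  then show ?thesis using enat k2 by simp
qed simp

lemma out1: "0 < j \<Longrightarrow> j < k \<Longrightarrow> s (u j) \<inter> W = {u (Suc j)}"
proof -
  assume j: "0 < j" "j < k"
  have deg: "outdeg_H s W (u j) = 1" using path j unfolding two_path_def by auto
  have "u (Suc j) \<in> s (u j)" using orient j by auto
  then show "s (u j) \<inter> W = {u (Suc j)}"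
    using deg uW[of "Suc j"] j unfolding outdeg_H_def by (intro card1) auto
qed

lemma no_back: "u i \<notin> s (u (Suc i))"
  using out1[of "Suc i"] ik uW[of i] uinj[of i "Suc (Suc i)"] by auto

lemma no_tri: "u (i + 2) \<notin> s (u i)"
proof
  assume a: "u (i + 2) \<in> s (u i)"
  define c where "c = [u i, u (Suc i), u (i + 2)]"
  have "walk_in E V c" unfolding walk_in_def c_def
  proof (intro conjI allI impI)
    fix t assume "Suc t < length [u i, u (Suc i), u (i + 2)]"
    then have "t = 0 \<or> t = 1" by auto
    then show "E ([u i, u (Suc i), u (i + 2)] ! t) ([u i, u (Suc i), u (i + 2)] ! Suc t)"
      using Epath[of i] Epath[of "Suc i"] ik by (auto simp: numeral_2_eq_2)
  qed (use uV ik in auto)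
  moreover have "distinct c" unfolding c_def using uinj ik by (auto simp: numeral_2_eq_2)
  moreover have "E (last c) (hd c)" unfolding c_def gadj_def using a uV ik by auto
  ultimately have "is_cycle E V c" unfolding is_cycle_def c_def by simp
  then have "girth E V \<le> enat (length c)" using girth_le[of E V c] by simp
  then have "girth E V \<le> enat 3" unfolding c_def by (simp add: numeral_3_eq_3)
  then have "enat (2 * k) \<le> enat 3" using gir by (metis order.trans)
  then show False using k2 by simp
qed

lemma conn: "v \<in> V \<Longrightarrow> dist_in E V (u i) v \<noteq> \<infinity>"
proof -
  assume vV: "v \<in> V"
  let ?ui = "u i"
  have uiV: "?ui \<in> V" using uV ik by simp
  define t where "t = V - {?ui}"
  define s2 where "s2 = s(?ui := t)"
  have le: "cost \<alpha> V s ?ui \<le> cost \<alpha> V s2 ?ui"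
    using NE uiV unfolding nash_equilibrium_def s2_def t_def by blast
  have d2: "dist_in (gadj V s2) V ?ui w \<noteq> \<infinity>" if "w \<in> V - {?ui}" for w
  proof -
    have "gadj V s2 ?ui w" using that uiV unfolding gadj_def s2_def t_def by auto
    then have "dist_in (gadj V s2) V ?ui w \<le> dist_in (gadj V s2) V ?ui ?ui + 1"
      using that by (intro dist_step[of "gadj V s2" ?ui w V ?ui]) auto
    then have "dist_in (gadj V s2) V ?ui w \<le> 1" using dist_refl[OF uiV] by simp
    then show ?thesis using enat_le_fin2 by fastforce
  qed
  have "(\<Sum>w\<in>V - {?ui}. dist_in (gadj V s2) V ?ui w) \<noteq> \<infinity>"
    using finV d2 by (intro sum_enat_fin) auto
  then have "cost \<alpha> V s2 ?ui \<noteq> \<infinity>" unfolding cost_def by auto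
  then have "cost \<alpha> V s ?ui \<noteq> \<infinity>" using le by auto
  then have "(\<Sum>w\<in>V - {?ui}. dist_in E V ?ui w) \<noteq> \<infinity>" unfolding cost_def by auto
  then have "v \<noteq> ?ui \<Longrightarrow> dist_in E V ?ui v \<noteq> \<infinity>" using vV finV sum_enat_fin_mem[of "V - {?ui}" v] by auto
  moreover have "dist_in E V ?ui ?ui \<noteq> \<infinity>" using dist_refl[OF uiV] by simp
  ultimately show ?thesis by blast
qed

end

lemma min_lip:
  assumes "(a'::enat) \<le> a + 1" "(b'::enat) \<le> b + 1"
  shows "min (enat c + a') (enat d + b') \<le> min (enat c + a) (enat d + b) + 1"
proof (cases "enat c + a \<le> enat d + b")
  case True
  have "min (enat c + a') (enat d + b') \<le> enat c + a'" by simp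
  also have "\<dots> \<le> enat c + (a + 1)" using assms(1) by (simp add: add_left_mono)
  finally show ?thesis using True by (simp add: min_def add.assoc)
next
  case False
  have "min (enat c + a') (enat d + b') \<le> enat d + b'" by simp
  also have "\<dots> \<le> enat d + (b + 1)" using assms(2) by (simp add: add_left_mono)
  finally show ?thesis using False by (simp add: min_def add.assoc)
qed

context NG begin

definition "x1q z = dist_in E Q (u k) z"
definition "x2q z = dist_in E Q (u 0) z"
definition "dd j = (if i \<le> j then j - i else i - j)"
definition "dd' j = (if j \<le> i then i - j else if j = Suc i then 2 else j - i - 1)"
definition "f z = (if z \<in> Pbar then enat (dd (idx z)) + h (idx z) z
                   else min (enat i + x2q z) (enat (k - i) + x1q z))"
definition "f' z = (if z \<in> Pbar then enat (dd' (idx z)) + h (idx z) z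
                   else min (enat i + x2q z) (enat (k - i - 1) + x1q z))"
definition "s' = s(u i := (s (u i) - {u (Suc i)}) \<union> {u (i + 2)})"
abbreviation "E' \<equiv> gadj V s'"

lemma QV: "Q \<subseteq> V" unfolding Q_def by blast

lemma x_vals: "x2q (u 0) = 0" "x1q (u k) = 0"
  "x1q (u 0) = dist_in E Q (u 0) (u k)" "x2q (u k) = dist_in E Q (u 0) (u k)"
  unfolding x1q_def x2q_def using u_Q[of 0] u_Q[of k] dist_refl dist_sym[OF Esym] by auto

lemma big: "enat a \<le> enat b + dist_in E Q (u 0) (u k)" if "a \<le> k" for a b
proof -
  have "enat a \<le> enat k" using that by simp
  also have "\<dots> \<le> dist_in E Q (u 0) (u k)" by (rule Dk)
  also have "\<dots> \<le> enat b + dist_in E Q (u 0) (u k)" by (simp add: add_increasing)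
  finally show ?thesis .
qed

lemma f_u: "j \<le> k \<Longrightarrow> f (u j) = enat (dd j)"
proof -
  assume j: "j \<le> k"
  consider "j = 0" | "j = k" | "0 < j \<and> j < k" using j by linarith
  then show ?thesis
  proof cases
    case 1
    have "u j \<notin> Pbar" using u_Q[of j] 1 V_split by blast
    then show ?thesis using 1 x_vals big[of i "k - i"] ik
      by (simp add: f_def dd_def min_absorb1)
  next
    case 2
    have "u j \<notin> Pbar" using u_Q[of j] 2 V_split by blast
    then show ?thesis using 2 x_vals big[of "k - i" i] ik
      by (simp add: f_def dd_def min_absorb2 add.commute)
  next
    case 3
    then show ?thesis using u_Pbar u_idx h_u by (simp add: f_def)
  qed
qed

lemma f'_u: "j \<le> k \<Longrightarrow> f' (u j) = enat (dd' j)"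
proof -
  assume j: "j \<le> k"
  consider "j = 0" | "j = k" | "0 < j \<and> j < k" using j by linarith
  then show ?thesis
  proof cases
    case 1
    have "u j \<notin> Pbar" using u_Q[of j] 1 V_split by blast
    then show ?thesis using 1 x_vals big[of i "k - i - 1"] ik
      by (simp add: f'_def dd'_def min_absorb1)
  next
    case 2
    have "u j \<notin> Pbar" using u_Q[of j] 2 V_split by blast
    then show ?thesis using 2 x_vals big[of "k - i - 1" i] ik
      by (simp add: f'_def dd'_def min_absorb2 add.commute)
  next
    case 3
    then show ?thesis using u_Pbar u_idx h_u by (simp add: f'_def)
  qed
qed

lemma f_A: "0 < j \<Longrightarrow> j < k \<Longrightarrow> z \<in> A j \<Longrightarrow> f z = enat (dd j) + h j z"
  using idx_eq Pbar_iff unfolding f_def by auto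

lemma f'_A: "0 < j \<Longrightarrow> j < k \<Longrightarrow> z \<in> A j \<Longrightarrow> f' z = enat (dd' j) + h j z"
  using idx_eq Pbar_iff unfolding f'_def by auto

lemma f_Q: "z \<in> Q \<Longrightarrow> f z = min (enat i + x2q z) (enat (k - i) + x1q z)"
  using V_split unfolding f_def by auto

lemma f'_Q: "z \<in> Q \<Longrightarrow> f' z = min (enat i + x2q z) (enat (k - i - 1) + x1q z)"
  using V_split unfolding f'_def by auto

lemma x_lip: "x \<in> Q \<Longrightarrow> y \<in> Q \<Longrightarrow> E x y \<Longrightarrow> x1q y \<le> x1q x + 1 \<and> x2q y \<le> x2q x + 1"
  unfolding x1q_def x2q_def by (auto intro: dist_step[of E x y Q])

lemma f_lip: "E x y \<Longrightarrow> f y \<le> f x + 1"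
proof -
  assume Exy: "E x y"
  consider (q) "x \<in> Q" "y \<in> Q" | (a) j where "0 < j" "j < k" "x \<in> A j" "y \<in> A j"
    | (p) j where "j < k" "x = u j \<and> y = u (Suc j) \<or> y = u j \<and> x = u (Suc j)"
    using edge_class[OF Exy] by blast
  then show ?thesis
  proof cases
    case q
    then show ?thesis using x_lip[OF q(1) q(2) Exy] f_Q min_lip by simp
  next
    case (a j) note j = a
    then show ?thesis using h_lip[OF j(4) Exy] f_A[OF j(1,2)]
      by (simp add: add.assoc add_left_mono)
  next
    case (p j) then show ?thesis using f_u[of j] f_u[of "Suc j"] unfolding dd_def
      by (auto simp: one_enat_def)
  qed
qed

lemma Ech: "E' x y \<longleftrightarrow> (E x y \<and> {x, y} \<noteq> {u i, u (Suc i)}) \<or> {x, y} = {u i, u (i + 2)}"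
proof -
  have a: "u (Suc i) \<in> s (u i)" using orient ik by auto
  have b: "u i \<notin> s (u (Suc i))" by (rule no_back)
  have V3: "u i \<in> V" "u (Suc i) \<in> V" "u (i + 2) \<in> V" using uV ik by auto
  have ne: "u i \<noteq> u (Suc i)" "u i \<noteq> u (i + 2)" "u (Suc i) \<noteq> u (i + 2)" using uinj ik by auto
  have sv': "u i \<notin> s (u i)" using sv[OF V3(1)] by auto
  show ?thesis
    unfolding gadj_def s'_def using a b V3 ne sv'
    by (auto simp: doubleton_eq_iff)
qed

lemma E'_of_E:
  assumes "E w z" "(w \<in> Q \<and> z \<in> Q) \<or> (\<exists>j. 0 < j \<and> j < k \<and> w \<in> A j \<and> z \<in> A j)"
  shows "E' w z"
proof -
  have "{w, z} \<noteq> {u i, u (Suc i)}"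
  proof
    assume eq: "{w, z} = {u i, u (Suc i)}"
    then have m: "u i \<in> {w, z}" "u (Suc i) \<in> {w, z}" by auto
    from assms(2) show False
    proof (elim disjE exE conjE)
      assume "w \<in> Q" "z \<in> Q"
      then show False using m u_Pbar[of "Suc i"] ik V_split by auto
    next
      fix j assume "0 < j" "j < k" "w \<in> A j" "z \<in> A j"
      then have "u i \<in> A j" "u (Suc i) \<in> A j" using m by auto
      then show False using uA_idx[of i j] uA_idx[of "Suc i" j] ik \<open>j < k\<close> by auto
    qed
  qed
  then show ?thesis using assms(1) Ech by blast
qed

lemma f'_lip: "E' x y \<Longrightarrow> f' y \<le> f' x + 1"
proof -
  assume Exy: "E' x y"
  show ?thesis
  proof (cases "{x, y} = {u i, u (i + 2)}")
    case True
    then have "(x = u i \<and> y = u (i + 2)) \<or> (y = u i \<and> x = u (i + 2))" by (auto simp: doubleton_eq_iff)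
    then show ?thesis using f'_u[of i] f'_u[of "i + 2"] ik unfolding dd'_def
      by (auto simp: one_enat_def numeral_eq_enat)
  next
    case False
    then have Exy0: "E x y" and nr: "{x, y} \<noteq> {u i, u (Suc i)}" using Exy Ech by auto
    consider (q) "x \<in> Q" "y \<in> Q" | (a) j where "0 < j" "j < k" "x \<in> A j" "y \<in> A j"
      | (p) j where "j < k" "x = u j \<and> y = u (Suc j) \<or> y = u j \<and> x = u (Suc j)"
      using edge_class[OF Exy0] by blast
    then show ?thesis
    proof cases
      case q
      then show ?thesis using x_lip[OF q(1) q(2) Exy0] f'_Q min_lip by simp
    next
      case (a j) note j = a
      then show ?thesis using h_lip[OF j(4) Exy0] f'_A[OF j(1,2)]
        by (simp add: add.assoc add_left_mono)
    next
      case (p j) note j = p(1) and xy = p(2)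
      then have "j \<noteq> i" using nr by (auto simp: insert_commute)
      then show ?thesis using j xy f'_u[of j] f'_u[of "Suc j"] unfolding dd'_def
        by (auto simp: one_enat_def)
    qed
  qed
qed

end

context NG begin

lemma path_pred: "j \<le> k \<Longrightarrow> j \<noteq> i \<Longrightarrow> \<exists>x\<in>V. E x (u j) \<and> f x + 1 \<le> f (u j)"
proof -
  assume j: "j \<le> k" "j \<noteq> i"
  show ?thesis
  proof (cases "i < j")
    case True
    have jk1: "j - 1 \<le> k" using j by simp
    have "E (u (j - 1)) (u (Suc (j - 1)))" using Epath[of "j - 1"] True j by simp
    then have E1: "E (u (j - 1)) (u j)" using True by simp
    have v1: "f (u (j - 1)) = enat (j - i - 1)" using f_u[OF jk1] True unfolding dd_def by simp
    have v2: "f (u j) = enat (j - i)" using f_u[OF j(1)] True unfolding dd_def by simp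
    have "f (u (j - 1)) + 1 \<le> f (u j)" unfolding v1 v2 using True by (simp add: one_enat_def)
    with E1 show ?thesis using uV[of "j - 1"] j by auto
  next
    case False
    then have ji: "j < i" using j by simp
    have "E (u j) (u (Suc j))" using Epath[of j] ji ik by simp
    then have "E (u (Suc j)) (u j)" using Esym by blast
    moreover have "f (u (Suc j)) + 1 \<le> f (u j)" using f_u[of j] f_u[of "Suc j"] ji ik
      unfolding dd_def by (simp add: one_enat_def; linarith)
    ultimately show ?thesis using uV[of "Suc j"] ji ik by auto
  qed
qed

lemma nrm: "a \<le> k \<Longrightarrow> b \<le> k \<Longrightarrow> {u a, u b} = {u i, u (Suc i)} \<longleftrightarrow> {a, b} = {i, Suc i}"
  using uinj ik by (auto simp: doubleton_eq_iff)

lemma path_pred': "j \<le> k \<Longrightarrow> j \<noteq> i \<Longrightarrow> \<exists>x\<in>V. E' x (u j) \<and> f' x + 1 \<le> f' (u j)"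
proof -
  assume j: "j \<le> k" "j \<noteq> i"
  consider "j < i" | "j = Suc i" | "j = i + 2" | "i + 2 < j" using j by linarith
  then show ?thesis
  proof cases
    case 1
    have "E (u j) (u (Suc j))" using Epath[of j] 1 ik by simp
    then have "E (u (Suc j)) (u j)" using Esym by blast
    moreover have "{u (Suc j), u j} \<noteq> {u i, u (Suc i)}" using nrm[of "Suc j" j] 1 ik
      by (auto simp: doubleton_eq_iff)
    ultimately have "E' (u (Suc j)) (u j)" using Ech by blast
    moreover have "f' (u (Suc j)) + 1 \<le> f' (u j)" using f'_u[of j] f'_u[of "Suc j"] 1 ik
      unfolding dd'_def by (simp add: one_enat_def; linarith)
    ultimately show ?thesis using uV[of "Suc j"] 1 ik by auto
  next
    case 2
    have "E (u (Suc i)) (u (Suc (Suc i)))" using Epath[of "Suc i"] ik by simp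
    then have "E (u (i + 2)) (u j)" using Esym 2 by simp
    moreover have "{u (i + 2), u j} \<noteq> {u i, u (Suc i)}" using nrm[of "i + 2" j] 2 ik
      by (auto simp: doubleton_eq_iff)
    ultimately have "E' (u (i + 2)) (u j)" using Ech by blast
    moreover have "f' (u (i + 2)) + 1 \<le> f' (u j)" using f'_u[of j] f'_u[of "i + 2"] 2 ik
      unfolding dd'_def by (simp add: one_enat_def numeral_eq_enat; linarith)
    ultimately show ?thesis using uV[of "i + 2"] ik by auto
  next
    case 3
    have "E' (u i) (u j)" using Ech 3 by blast
    moreover have "f' (u i) + 1 \<le> f' (u j)" using f'_u[of j] f'_u[of i] 3 ik
      unfolding dd'_def by (simp add: one_enat_def; linarith)
    ultimately show ?thesis using uV[of i] ik by auto
  next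
    case 4
    have jk1: "j - 1 \<le> k" using j by simp
    have "E (u (j - 1)) (u (Suc (j - 1)))" using Epath[of "j - 1"] 4 j by simp
    then have "E (u (j - 1)) (u j)" using 4 by simp
    moreover have "{u (j - 1), u j} \<noteq> {u i, u (Suc i)}" using nrm[of "j - 1" j] 4 j
      by (auto simp: doubleton_eq_iff)
    ultimately have E1: "E' (u (j - 1)) (u j)" using Ech by blast
    have c1: "\<not> (j - 1 \<le> i)" "j - 1 \<noteq> Suc i" "j - 1 - i - 1 = j - i - 2" using 4 by auto
    have v1: "f' (u (j - 1)) = enat (j - i - 2)" using f'_u[OF jk1] c1 unfolding dd'_def by simp
    have v2: "f' (u j) = enat (j - i - 1)" using f'_u[OF j(1)] 4 unfolding dd'_def by simp
    have "f' (u (j - 1)) + 1 \<le> f' (u j)" unfolding v1 v2 using 4 by (simp add: one_enat_def)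
    with E1 show ?thesis using uV[of "j - 1"] j by auto
  qed
qed

lemma f_pred:
  assumes zV: "z \<in> V" and zi: "z \<noteq> u i" and fz: "f z \<noteq> \<infinity>"
  shows "\<exists>x\<in>V. E x z \<and> f x + 1 \<le> f z"
proof (cases "z \<in> Pbar")
  case True
  then have j: "0 < idx z" "idx z < k" "z \<in> A (idx z)" using Pbar_idx by auto
  define j where "j = idx z"
  obtain n where n: "h j z = enat n" using h_fin j unfolding j_def by blast
  show ?thesis
  proof (cases "n > 0")
    case True
    obtain w where w: "w \<in> A j" "E w z" "h j w = enat (n - 1)" using h_pred[of z j n] j n True
      unfolding j_def by auto
    have "f w + 1 \<le> f z" using f_A[of j w] f_A[of j z] w j n True unfolding j_def
      by (simp add: one_enat_def)
    moreover have "w \<in> V" using w A_V[of j] j unfolding j_def by auto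
    ultimately show ?thesis using w by blast
  next
    case False
    then have "z = u j" using h_zero[of j z] n by (simp add: zero_enat_def)
    then show ?thesis using path_pred[of j] j zi unfolding j_def by auto
  qed
next
  case False
  then have zQ: "z \<in> Q" using zV unfolding Q_def by blast
  show ?thesis
  proof (cases "enat i + x2q z \<le> enat (k - i) + x1q z")
    case True
    then have fz': "f z = enat i + x2q z" using f_Q[OF zQ] by simp
    then obtain n where n: "x2q z = enat n" using fz by (cases "x2q z") auto
    show ?thesis
    proof (cases "n > 0")
      case True
      obtain w where w: "w \<in> Q" "E w z" "x2q w = enat (n - 1)"
        using dist_pred[of E Q "u 0" z n] n True unfolding x2q_def by auto
      have "f w \<le> enat i + x2q w" using f_Q[OF w(1)] by simp
      then have "f w + 1 \<le> enat i + enat (n - 1) + 1" using w by (simp add: add_right_mono)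
      also have "\<dots> = f z" using fz' n True by (simp add: one_enat_def)
      finally show ?thesis using w QV by blast
    next
      case False
      then have "z = u 0" using dist_zero[of E Q "u 0" z] n unfolding x2q_def by (simp add: zero_enat_def)
      then show ?thesis using path_pred[of 0] zi by auto
    qed
  next
    case False
    then have fz': "f z = enat (k - i) + x1q z" using f_Q[OF zQ] by simp
    then obtain n where n: "x1q z = enat n" using fz by (cases "x1q z") auto
    show ?thesis
    proof (cases "n > 0")
      case True
      obtain w where w: "w \<in> Q" "E w z" "x1q w = enat (n - 1)"
        using dist_pred[of E Q "u k" z n] n True unfolding x1q_def by auto
      have "f w \<le> enat (k - i) + x1q w" using f_Q[OF w(1)] by simp
      then have "f w + 1 \<le> enat (k - i) + enat (n - 1) + 1" using w by (simp add: add_right_mono)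
      also have "\<dots> = f z" using fz' n True by (simp add: one_enat_def)
      finally show ?thesis using w QV by blast
    next
      case False
      then have "z = u k" using dist_zero[of E Q "u k" z] n unfolding x1q_def by (simp add: zero_enat_def)
      then show ?thesis using path_pred[of k] zi by auto
    qed
  qed
qed

lemma f'_pred:
  assumes zV: "z \<in> V" and zi: "z \<noteq> u i" and fz: "f' z \<noteq> \<infinity>"
  shows "\<exists>x\<in>V. E' x z \<and> f' x + 1 \<le> f' z"
proof (cases "z \<in> Pbar")
  case True
  then have j: "0 < idx z" "idx z < k" "z \<in> A (idx z)" using Pbar_idx by auto
  define j where "j = idx z"
  obtain n where n: "h j z = enat n" using h_fin j unfolding j_def by blast
  show ?thesis
  proof (cases "n > 0")
    case True
    obtain w where w: "w \<in> A j" "E w z" "h j w = enat (n - 1)" using h_pred[of z j n] j n True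
      unfolding j_def by auto
    have "f' w + 1 \<le> f' z" using f'_A[of j w] f'_A[of j z] w j n True unfolding j_def
      by (simp add: one_enat_def)
    moreover have "w \<in> V" using w A_V[of j] j unfolding j_def by auto
    moreover have "E' w z" using E'_of_E[of w z] w j unfolding j_def by blast
    ultimately show ?thesis by blast
  next
    case False
    then have "z = u j" using h_zero[of j z] n by (simp add: zero_enat_def)
    then show ?thesis using path_pred'[of j] j zi unfolding j_def by auto
  qed
next
  case False
  then have zQ: "z \<in> Q" using zV unfolding Q_def by blast
  show ?thesis
  proof (cases "enat i + x2q z \<le> enat (k - i - 1) + x1q z")
    case True
    then have fz': "f' z = enat i + x2q z" using f'_Q[OF zQ] by simp
    then obtain n where n: "x2q z = enat n" using fz by (cases "x2q z") auto
    show ?thesis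
    proof (cases "n > 0")
      case True
      obtain w where w: "w \<in> Q" "E w z" "x2q w = enat (n - 1)"
        using dist_pred[of E Q "u 0" z n] n True unfolding x2q_def by auto
      have "f' w \<le> enat i + x2q w" using f'_Q[OF w(1)] by simp
      then have "f' w + 1 \<le> enat i + enat (n - 1) + 1" using w by (simp add: add_right_mono)
      also have "\<dots> = f' z" using fz' n True by (simp add: one_enat_def)
      finally show ?thesis using w QV E'_of_E[of w z] zQ by blast
    next
      case False
      then have "z = u 0" using dist_zero[of E Q "u 0" z] n unfolding x2q_def by (simp add: zero_enat_def)
      then show ?thesis using path_pred'[of 0] zi by auto
    qed
  next
    case False
    then have fz': "f' z = enat (k - i - 1) + x1q z" using f'_Q[OF zQ] by simp
    then obtain n where n: "x1q z = enat n" using fz by (cases "x1q z") auto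
    show ?thesis
    proof (cases "n > 0")
      case True
      obtain w where w: "w \<in> Q" "E w z" "x1q w = enat (n - 1)"
        using dist_pred[of E Q "u k" z n] n True unfolding x1q_def by auto
      have "f' w \<le> enat (k - i - 1) + x1q w" using f'_Q[OF w(1)] by simp
      then have "f' w + 1 \<le> enat (k - i - 1) + enat (n - 1) + 1" using w by (simp add: add_right_mono)
      also have "\<dots> = f' z" using fz' n True by (simp add: one_enat_def)
      finally show ?thesis using w QV E'_of_E[of w z] zQ by blast
    next
      case False
      then have "z = u k" using dist_zero[of E Q "u k" z] n unfolding x1q_def by (simp add: zero_enat_def)
      then show ?thesis using path_pred'[of k] zi by auto
    qed
  qed
qed

lemma dist_f: "z \<in> V \<Longrightarrow> dist_in E V (u i) z = f z"
  by (rule potential[of "u i" V f E]) (use uV ik f_u[of i] f_lip f_pred dd_def in \<open>auto simp: zero_enat_def\<close>)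

lemma dist_f': "z \<in> V \<Longrightarrow> dist_in E' V (u i) z = f' z"
  by (rule potential[of "u i" V f' E']) (use uV ik f'_u[of i] f'_lip f'_pred dd'_def in \<open>auto simp: zero_enat_def\<close>)

end

lemma nat_min_diff:
  assumes "(2::nat) \<le> K"
  shows "real (min (I + b) (K - 1 + a)) - real (min (I + b) (K + a)) = (if a + K \<le> b + I then -1 else 0)"
  using assms by (auto simp: min_def)

context NG begin

lemma f_fin: "z \<in> V \<Longrightarrow> f z \<noteq> \<infinity>"
  using conn dist_f by metis

lemma f'_le: "z \<in> Q \<Longrightarrow> f' z \<le> f z"
proof -
  assume zQ: "z \<in> Q"
  have "enat (k - i - 1) + x1q z \<le> enat (k - i) + x1q z" by (intro add_right_mono) simp
  then show ?thesis unfolding f_Q[OF zQ] f'_Q[OF zQ] by (rule min.mono[OF order.refl])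
qed

lemma f'_fin: "z \<in> V \<Longrightarrow> f' z \<noteq> \<infinity>"
proof -
  assume zV: "z \<in> V"
  show ?thesis
  proof (cases "z \<in> Pbar")
    case True
    then have j: "z \<in> A (idx z)" using Pbar_idx by auto
    obtain n where "h (idx z) z = enat n" using h_fin[OF j] by auto
    then show ?thesis using True unfolding f'_def by simp
  next
    case False
    then have "z \<in> Q" using zV Q_def by blast
    then show ?thesis using f'_le f_fin[OF zV] enat_le_fin2 by blast
  qed
qed

definition "F z = the_enat (f z)"
definition "F' z = the_enat (f' z)"

lemma fF: "z \<in> V \<Longrightarrow> f z = enat (F z)"
proof -
  assume "z \<in> V"
  then obtain n where "f z = enat n" using f_fin by blast
  then show ?thesis unfolding F_def by simp
qed

lemma fF': "z \<in> V \<Longrightarrow> f' z = enat (F' z)"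
proof -
  assume "z \<in> V"
  then obtain n where "f' z = enat n" using f'_fin by blast
  then show ?thesis unfolding F'_def by simp
qed

lemma card_s': "card (s' (u i)) = card (s (u i))"
proof -
  have a: "u (Suc i) \<in> s (u i)" using orient ik by auto
  have "s (u i) \<subseteq> V" using sv[of "u i"] uV[of i] ik by auto
  then have fin: "finite (s (u i))" using finV by (rule finite_subset)
  have "s' (u i) = insert (u (i + 2)) (s (u i) - {u (Suc i)})" unfolding s'_def by auto
  then have "card (s' (u i)) = Suc (card (s (u i) - {u (Suc i)}))"
    using fin no_tri by simp
  also have "\<dots> = card (s (u i))" by (rule card_Suc_Diff1[OF fin a])
  finally show ?thesis .
qed

lemma cost_eq: "cost \<alpha> V s (u i) = ereal (\<alpha> * real (card (s (u i)))) + ereal (\<Sum>z\<in>V - {u i}. real (F z))"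
proof -
  have "(\<Sum>z\<in>V - {u i}. dist_in E V (u i) z) = (\<Sum>z\<in>V - {u i}. enat (F z))"
    using dist_f fF by (intro sum.cong) auto
  also have "\<dots> = enat (\<Sum>z\<in>V - {u i}. F z)" by (simp add: of_nat_eq_enat[symmetric])
  finally show ?thesis unfolding cost_def by simp
qed

lemma cost'_eq: "cost \<alpha> V s' (u i) = ereal (\<alpha> * real (card (s (u i)))) + ereal (\<Sum>z\<in>V - {u i}. real (F' z))"
proof -
  have "(\<Sum>z\<in>V - {u i}. dist_in E' V (u i) z) = (\<Sum>z\<in>V - {u i}. enat (F' z))"
    using dist_f' fF' by (intro sum.cong) auto
  also have "\<dots> = enat (\<Sum>z\<in>V - {u i}. F' z)" by (simp add: of_nat_eq_enat[symmetric])
  finally show ?thesis unfolding cost_def using card_s' by simp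
qed

definition "g z = real (F' z) - real (F z)"

lemma g_ui: "g (u i) = 0"
  using fF[of "u i"] fF'[of "u i"] f_u[of i] f'_u[of i] uV[of i] ik unfolding g_def dd_def dd'_def by simp

lemma g_A: "0 < j \<Longrightarrow> j < k \<Longrightarrow> z \<in> A j \<Longrightarrow> g z = real (dd' j) - real (dd j)"
proof -
  assume j: "0 < j" "j < k" "z \<in> A j"
  obtain n where n: "h j z = enat n" using h_fin[OF j(3)] by auto
  have zV: "z \<in> V" using A_V[of j] j by auto
  have "F z = dd j + n" using fF[OF zV] f_A[OF j] n by simp
  moreover have "F' z = dd' j + n" using fF'[OF zV] f'_A[OF j] n by simp
  ultimately show ?thesis unfolding g_def by simp
qed

definition "Nset = {v \<in> Q. x1q v + enat (k - i) \<le> x2q v + enat i}"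

lemma g_Q: "z \<in> Q \<Longrightarrow> g z = (if z \<in> Nset then -1 else 0)"
proof -
  assume zQ: "z \<in> Q"
  have zV: "z \<in> V" using zQ QV by blast
  have fz: "f z = min (enat i + x2q z) (enat (k - i) + x1q z)" by (rule f_Q[OF zQ])
  have fz': "f' z = min (enat i + x2q z) (enat (k - i - 1) + x1q z)" by (rule f'_Q[OF zQ])
  have fin: "f z \<noteq> \<infinity>" by (rule f_fin[OF zV])
  have K: "2 \<le> k - i" using ik by simp
  show ?thesis
  proof (cases "x1q z")
    case (enat a)
    show ?thesis
    proof (cases "x2q z")
      case (enat b)
      have "F z = min (i + b) (k - i + a)" using fF[OF zV] fz \<open>x1q z = enat a\<close> enat by simp
      moreover have "F' z = min (i + b) (k - i - 1 + a)" using fF'[OF zV] fz' \<open>x1q z = enat a\<close> enat by simp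
      moreover have "z \<in> Nset \<longleftrightarrow> a + (k - i) \<le> b + i" unfolding Nset_def using zQ \<open>x1q z = enat a\<close> enat by simp
      ultimately show ?thesis unfolding g_def using nat_min_diff[OF K, of i b a] by simp
    next
      case infinity
      have "F z = k - i + a" using fF[OF zV] fz \<open>x1q z = enat a\<close> infinity by simp
      moreover have "F' z = k - i - 1 + a" using fF'[OF zV] fz' \<open>x1q z = enat a\<close> infinity by simp
      moreover have "z \<in> Nset" unfolding Nset_def using zQ infinity by simp
      ultimately show ?thesis unfolding g_def using K by simp
    qed
  next
    case infinity
    then have "f z = enat i + x2q z" using fz by simp
    then obtain b where b: "x2q z = enat b" using fin by (cases "x2q z") auto
    have "F z = i + b" using fF[OF zV] fz infinity b by simp
    moreover have "F' z = i + b" using fF'[OF zV] fz' infinity b by simp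
    moreover have "z \<notin> Nset" unfolding Nset_def using infinity b by simp
    ultimately show ?thesis unfolding g_def by simp
  qed
qed

lemma finA: "j \<le> k \<Longrightarrow> finite (A j)" using A_V finV finite_subset by blast

lemma sum_Pbar: "(\<Sum>z\<in>Pbar. g z) = real (card (A (Suc i))) - (\<Sum>j\<in>{i+2..<k}. real (card (A j)))"
proof -
  have "(\<Sum>z\<in>Pbar. g z) = (\<Sum>j\<in>{0<..<k}. \<Sum>z\<in>A j. g z)"
    unfolding Pbar_def by (rule sum.UNION_disjoint) (use finA disjoint in auto)
  also have "\<dots> = (\<Sum>j\<in>{0<..<k}. real (card (A j)) * (real (dd' j) - real (dd j)))"
    by (rule sum.cong) (auto simp: g_A)
  also have "\<dots> = (\<Sum>j\<in>{0<..<k}. (if j = Suc i then real (card (A j)) else 0)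
                 - (if i + 2 \<le> j then real (card (A j)) else 0))"
  proof (rule sum.cong)
    fix j assume "j \<in> {0<..<k}"
    show "real (card (A j)) * (real (dd' j) - real (dd j)) =
      (if j = Suc i then real (card (A j)) else 0) - (if i + 2 \<le> j then real (card (A j)) else 0)"
      unfolding dd_def dd'_def by (auto simp: of_nat_diff)
  qed simp
  also have "\<dots> = real (card (A (Suc i))) - (\<Sum>j\<in>{i+2..<k}. real (card (A j)))"
  proof -
    have "(\<Sum>j\<in>{0<..<k}. (if j = Suc i then real (card (A j)) else 0)) = real (card (A (Suc i)))"
      using ik by (simp add: sum.delta)
    moreover have "(\<Sum>j\<in>{0<..<k}. (if i + 2 \<le> j then real (card (A j)) else 0)) = (\<Sum>j\<in>{i+2..<k}. real (card (A j)))"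
    proof -
      have eq: "{j \<in> {0<..<k}. i + 2 \<le> j} = {i+2..<k}" by auto
      have "(\<Sum>j\<in>{j \<in> {0<..<k}. i + 2 \<le> j}. real (card (A j))) = (\<Sum>j\<in>{0<..<k}. (if i + 2 \<le> j then real (card (A j)) else 0))"
        by (rule sum.inter_filter) simp
      then show ?thesis unfolding eq by simp
    qed
    ultimately show ?thesis by (simp add: sum_subtractf)
  qed
  finally show ?thesis .
qed

lemma sum_Q: "(\<Sum>z\<in>Q. g z) = - real (card Nset)"
proof -
  have "(\<Sum>z\<in>Q. g z) = (\<Sum>z\<in>Q. if z \<in> Nset then -1 else 0)" by (rule sum.cong) (auto simp: g_Q)
  also have "\<dots> = - real (card (Q \<inter> Nset))"
  proof -
    have "finite Q" using QV finV by (rule finite_subset)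
    then show ?thesis by (simp add: sum.If_cases)
  qed
  also have "Q \<inter> Nset = Nset" unfolding Nset_def by auto
  finally show ?thesis .
qed

lemma main: "cost \<alpha> V s' (u i) - cost \<alpha> V s (u i) =
   ereal (real (card (A (Suc i))) - (\<Sum>j\<in>{i+2..<k}. real (card (A j))) - real (card Nset))"
proof -
  have finQ: "finite Q" "finite Pbar" using QV Pbar_V finV by (auto intro: finite_subset)
  have "(\<Sum>z\<in>V - {u i}. real (F' z)) - (\<Sum>z\<in>V - {u i}. real (F z)) = (\<Sum>z\<in>V - {u i}. g z)"
    unfolding g_def by (simp add: sum_subtractf)
  also have "\<dots> = (\<Sum>z\<in>V. g z)" using finV g_ui by (simp add: sum_diff1)
  also have "\<dots> = (\<Sum>z\<in>Pbar \<union> Q. g z)" by (rule arg_cong[where f="sum g", OF V_split(1)])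
  also have "\<dots> = (\<Sum>z\<in>Pbar. g z) + (\<Sum>z\<in>Q. g z)"
    by (rule sum.union_disjoint[OF finQ(2) finQ(1) V_split(2)])
  finally have "(\<Sum>z\<in>V - {u i}. real (F' z)) - (\<Sum>z\<in>V - {u i}. real (F z)) =
    real (card (A (Suc i))) - (\<Sum>j\<in>{i+2..<k}. real (card (A j))) - real (card Nset)"
    using sum_Pbar sum_Q by simp
  then show ?thesis unfolding cost_eq cost'_eq by simp
qed

end

context NG begin
lemma x1_eq: "dist_in E Q v (u k) = x1q v" unfolding x1q_def by (rule dist_sym[OF Esym])
lemma x2_eq: "dist_in E Q v (u 0) = x2q v" unfolding x2q_def by (rule dist_sym[OF Esym])
end

theorem lemma1:
  fixes V :: "'a set" and s :: "'a \<Rightarrow> 'a set" and \<alpha> :: real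
    and W :: "'a set" and u :: "nat \<Rightarrow> 'a" and k i :: nat
  assumes "finite V" and "\<alpha> > 0"
    and NE: "nash_equilibrium \<alpha> V s"
    and H: "two_edge_cc (gadj V s) V W" and nontriv: "card W \<ge> 3"
    and path: "two_path V s W u k"
    and orient: "\<forall>j<k. u (Suc j) \<in> s (u j)"
    and gir: "enat (2 * k) \<le> girth (gadj V s) V"
    and i: "i + 2 \<le> k"
  shows
    "let E = gadj V s;
         U = (\<lambda>j. card (Tset E V W (u j)));
         Pbar = (\<Union>j\<in>{0<..<k}. Tset E V W (u j));
         x1 = (\<lambda>v. dist_in E (V - Pbar) v (u k));
         x2 = (\<lambda>v. dist_in E (V - Pbar) v (u 0));
         N = card {v \<in> V - Pbar. x1 v + enat (k - i) \<le> x2 v + enat i};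
         s' = s(u i := (s (u i) - {u (Suc i)}) \<union> {u (i + 2)})
     in cost \<alpha> V s' (u i) - cost \<alpha> V s (u i)
        = ereal (real (U (Suc i)) - (\<Sum>j\<in>{i+2..<k}. real (U j)) - real N)"
proof -
  interpret NG V s \<alpha> W u k i by unfold_locales (use assms in auto)
  have P: "(\<Union>j\<in>{0<..<k}. Tset (gadj V s) V W (u j)) = Pbar" unfolding Pbar_def A_def ..
  have N: "{v \<in> V - Pbar. dist_in (gadj V s) (V - Pbar) v (u k) + enat (k - i) \<le> dist_in (gadj V s) (V - Pbar) v (u 0) + enat i} = Nset"
    unfolding Nset_def Q_def[symmetric] x1_eq x2_eq ..
  show ?thesis unfolding Let_def P N using main unfolding s'_def A_def by simp
qed

end
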